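(* Let $b,n\ge1$ and $1\le c\le b$ be integers and let $p_1,\dots,p_b\ge 0$ satisfy $p_1=p_2=\dots=p_c>p_{c+1}\ge p_{c+2}\ge\dots\ge p_b$. Then for every integer $\tilde c$ with $1\le\tilde c\le c$ and every integer $k$ with $0\le k\le n(b-1)$, $$\frac{\Pr(\mathrm{DBS}(\tilde c))}{\tilde c^{\,n}}\ \ge\ \frac{\Pr(\mathrm{LDS}_{\le k})}{|\mathrm{LDS}_{\le k}|}.$$
   Context: Search-tree model: a complete $b$-ary tree of depth $n$ whose leaves are identified with sequences $(j_1,\dots,j_n)\in\{1,\dots,b\}^n$. Given reals $p_1,\dots,p_b\ge0$, the success probability of a leaf is $\prod_{i=1}^n p_{j_i}$, and for a set $S$ of leaves, $\Pr(S)=\sum_{(j_1,\dots,j_n)\in S}\prod_{i=1}^n p_{j_i}$; $|S|$ is the number of leaves in $S$. For $1\le c\le b$, $\mathrm{DBS}(c)=\{1,\dots,c\}^n$ (so $|\mathrm{DBS}(c)|=c^n$ and $\Pr(\mathrm{DBS}(c))=(\sum_{i=1}^c p_i)^n$). The discrepancy of a leaf $(j_1,\dots,j_n)$ is $\sum_{i=1}^n (j_i-1)$, and $\mathrm{LDS}_{\le k}$ is the set of leaves of discrepancy at most $k$. *)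

theory Defs
  imports "HOL-Library.FuncSet" Complex_Main
begin

text \<open>Leaves of the complete b-ary tree of depth n: sequences (j_0,...,j_{n-1}) with entries in {1..b},
  represented as extensional functions on {0..<n}.\<close>
definition leaves :: "nat \<Rightarrow> nat \<Rightarrow> (nat \<Rightarrow> nat) set" where
  "leaves b n = PiE {0..<n} (\<lambda>_. {1..b})"

definition leaf_prob :: "(nat \<Rightarrow> real) \<Rightarrow> nat \<Rightarrow> (nat \<Rightarrow> nat) \<Rightarrow> real" where
  "leaf_prob p n j = (\<Prod>i<n. p (j i))"

definition Pr :: "(nat \<Rightarrow> real) \<Rightarrow> nat \<Rightarrow> (nat \<Rightarrow> nat) set \<Rightarrow> real" where
  "Pr p n S = (\<Sum>j\<in>S. leaf_prob p n j)"

definition DBS :: "nat \<Rightarrow> nat \<Rightarrow> (nat \<Rightarrow> nat) set" where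
  "DBS c n = leaves c n"

definition discrepancy :: "nat \<Rightarrow> (nat \<Rightarrow> nat) \<Rightarrow> nat" where
  "discrepancy n j = (\<Sum>i<n. j i - 1)"

definition LDS_le :: "nat \<Rightarrow> nat \<Rightarrow> nat \<Rightarrow> (nat \<Rightarrow> nat) set" where
  "LDS_le b n k = {j \<in> leaves b n. discrepancy n j \<le> k}"

end

theory Submission
  imports Defs
begin

theorem theorem2:
  fixes b n c c' k :: nat and p :: "nat \<Rightarrow> real"
  assumes "b \<ge> 1" and "n \<ge> 1" and "1 \<le> c" and "c \<le> b"
    and "\<And>i. 1 \<le> i \<Longrightarrow> i \<le> b \<Longrightarrow> p i \<ge> 0"
    and "\<And>i. 1 \<le> i \<Longrightarrow> i \<le> c \<Longrightarrow> p i = p 1"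
    and "c < b \<Longrightarrow> p c > p (c + 1)"
    and "\<And>i. c + 1 \<le> i \<Longrightarrow> i < b \<Longrightarrow> p i \<ge> p (i + 1)"
    and "1 \<le> c'" and "c' \<le> c"
    and "k \<le> n * (b - 1)"
  shows "Pr p n (DBS c' n) / real c' ^ n
           \<ge> Pr p n (LDS_le b n k) / real (card (LDS_le b n k))"
proof -
  have tail: "c + 1 + d \<le> b \<Longrightarrow> p (c + 1 + d) \<le> p (c + 1)" for d
  proof (induction d)
    case 0 then show ?case by simp
  next
    case (Suc d)
    have "p (c + 1 + Suc d) \<le> p (c + 1 + d)" using assms(8)[of "c+1+d"] Suc.prems by simp
    then show ?case using Suc by simp
  qed
  have le1: "p i \<le> p 1" if "1 \<le> i" "i \<le> b" for i
  proof (cases "i \<le> c")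
    case True then show ?thesis using assms(6)[of i] that by simp
  next
    case False
    define d where "d = i - (c + 1)"
    then have d: "i = c + 1 + d" using False by simp
    have "c < b" using False that by simp
    then have "p (c+1) < p c" using assms(7) by simp
    moreover have "p c = p 1" using assms(6)[of c] assms(3) by simp
    ultimately show ?thesis using tail[of d] d that by simp
  qed
  have p1: "p 1 \<ge> 0" using assms(5)[of 1] assms(1) by simp
  have lp: "leaf_prob p n j \<le> p 1 ^ n" if "j \<in> leaves b n" for j
  proof -
    have "\<forall>i<n. j i \<in> {1..b}" using that unfolding leaves_def by (auto simp: PiE_def Pi_def)
    then have "(\<Prod>i<n. p (j i)) \<le> (\<Prod>i<n. p 1)"
      by (intro prod_mono) (metis assms(5) le1 atLeastAtMost_iff lessThan_iff)
    then show ?thesis unfolding leaf_prob_def by simp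
  qed
  have rhs: "Pr p n (LDS_le b n k) \<le> real (card (LDS_le b n k)) * p 1 ^ n"
    unfolding Pr_def by (rule sum_bounded_above) (use lp in \<open>auto simp: LDS_le_def\<close>)
  have rhs2: "Pr p n (LDS_le b n k) / real (card (LDS_le b n k)) \<le> p 1 ^ n"
  proof (cases "card (LDS_le b n k) = 0")
    case True then show ?thesis using p1 by simp
  next
    case False then show ?thesis using rhs by (simp add: divide_le_eq mult.commute)
  qed
  have lpD: "leaf_prob p n j = p 1 ^ n" if "j \<in> DBS c' n" for j
  proof -
    have "\<forall>i<n. j i \<in> {1..c'}" using that unfolding DBS_def leaves_def by (auto simp: PiE_def Pi_def)
    then have "(\<Prod>i<n. p (j i)) = (\<Prod>i<n. p 1)"
      proof (intro prod.cong refl)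
      fix i assume "i \<in> {..<n}"
      then have "1 \<le> j i" "j i \<le> c" using \<open>\<forall>i<n. j i \<in> {1..c'}\<close> assms(10) by auto
      then show "p (j i) = p 1" by (rule assms(6))
    qed
    then show ?thesis unfolding leaf_prob_def by simp
  qed
  have cardD: "card (DBS c' n) = c' ^ n"
    unfolding DBS_def leaves_def by (simp add: card_PiE)
  have "Pr p n (DBS c' n) = real (c' ^ n) * p 1 ^ n"
    unfolding Pr_def using lpD cardD by simp
  then have "Pr p n (DBS c' n) / real c' ^ n = p 1 ^ n" using assms(9) by simp
  then show ?thesis using rhs2 by simp
qed

end
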